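(* For any two finite structures $\mathcal M$ and $\mathcal N$ over a vocabulary containing the binary relation symbol $E$, and any points $w\in\mathrm{DOM}(\mathcal M)$ and $u\in\mathrm{DOM}(\mathcal N)$, we have $\mathsf{WL}^\infty(\mathcal M,w)=\mathsf{WL}^\infty(\mathcal N,u)$ if and only if $\mathcal M\uplus\mathcal N\models\varphi_{\mathsf{WL}}(w,u)$, where $\varphi_{\mathsf{WL}}(x,y) := \mathrm{GFP}_{W,x,y}\big[Wxy\land\forall z\,\big(Hyx[\,Exy\land Wyz,\ Eyx\land Wxz\,]\big)\big]$.
   Context: $\mathcal M\uplus\mathcal N$ is the disjoint union of $\mathcal M$ and $\mathcal N$ (domains and relations taken as disjoint unions). Weisfeiler–Leman colors with respect to $E$: $c^{\mathcal M}_0(w)=\ast$ (a fixed constant), $c^{\mathcal M}_{t+1}(w)=\big(c^{\mathcal M}_t(w),\{\{c^{\mathcal M}_t(v):(w,v)\in E^{\mathcal M}\}\}\big)$ (multiset); $\mathsf{WL}^\infty(\mathcal M,w)=\mathsf{WL}^\infty(\mathcal N,u)$ means that $w$ and $u$ receive the same stable Weisfeiler–Leman color, i.e. $c^{\mathcal M}_t(w)=c^{\mathcal N}_t(u)$ for all $t\in\mathbb N$. First-order logic is extended as follows. Härtig's quantifier: for formulae $\varphi,\psi$ and variables $x,y$, $Hxy[\varphi,\psi]$ is a formula, true in a structure $\mathcal A$ under an assignment $s$ iff $|\{a\in\mathrm{DOM}(\mathcal A):\mathcal A\models\varphi[s(x\mapsto a)]\}|=|\{b\in\mathrm{DOM}(\mathcal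 A):\mathcal A\models\psi[s(y\mapsto b)]\}|$ (so $x$ is bound in $\varphi$ and $y$ is bound in $\psi$). Greatest fixed points: for a formula $\varphi(x,y)$ (possibly with Härtig quantifiers) containing a binary relation symbol $W$, $\mathrm{GFP}_{W,x,y}[\varphi]$ is a formula with free variables $x,y$; in $\mathcal A$ let $W^0=\mathrm{DOM}(\mathcal A)^2$ and $W^{n+1}=\{(a,b)\in\mathrm{DOM}(\mathcal A)^2:\mathcal A\models\varphi(a,b)\text{ with }W\text{ interpreted as }W^n\}$; then $\mathcal A\models\mathrm{GFP}_{W,x,y}[\varphi](a,b)$ iff $(a,b)\in W^n$ for all $n\in\mathbb N$. *)

theory Defs
  imports Main "HOL-Library.Multiset"
begin

text \<open>Finite structures: only the binary relation symbol E matters for both sides of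
the theorem (WL colours and the formula mention only E), so a structure is
rendered by its domain and the interpretation of E.\<close>

record 'a struc =
  sdom :: "'a set"
  sE :: "('a \<times> 'a) set"

definition finite_struc :: "'a struc \<Rightarrow> bool" where
  "finite_struc M \<longleftrightarrow> finite (sdom M) \<and> sE M \<subseteq> sdom M \<times> sdom M"

definition dunion :: "'a struc \<Rightarrow> 'b struc \<Rightarrow> ('a + 'b) struc" where
  "dunion M N = \<lparr> sdom = Inl ` sdom M \<union> Inr ` sdom N,
     sE = map_prod Inl Inl ` sE M \<union> map_prod Inr Inr ` sE N \<rparr>"

datatype wlcolor = Star | Pair wlcolor "wlcolor multiset"

fun wl :: "'a struc \<Rightarrow> nat \<Rightarrow> 'a \<Rightarrow> wlcolor" where
  "wl M 0 w = Star"
| "wl M (Suc t) w = Pair (wl M t w) (image_mset (wl M t) (mset_set {v. (w, v) \<in> sE M}))"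

definition WL_inf_eq :: "'a struc \<Rightarrow> 'a \<Rightarrow> 'b struc \<Rightarrow> 'b \<Rightarrow> bool" where
  "WL_inf_eq M w N u \<longleftrightarrow> (\<forall>t. wl M t w = wl N t u)"

definition hartig :: "'a set \<Rightarrow> ('a \<Rightarrow> bool) \<Rightarrow> ('a \<Rightarrow> bool) \<Rightarrow> bool" where
  "hartig D P Q \<longleftrightarrow> card {a \<in> D. P a} = card {b \<in> D. Q b}"

fun gfp_stage :: "'a set \<Rightarrow> (('a \<Rightarrow> 'a \<Rightarrow> bool) \<Rightarrow> 'a \<Rightarrow> 'a \<Rightarrow> bool) \<Rightarrow> nat \<Rightarrow> 'a \<Rightarrow> 'a \<Rightarrow> bool" where
  "gfp_stage D \<Phi> 0 = (\<lambda>a b. a \<in> D \<and> b \<in> D)"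
| "gfp_stage D \<Phi> (Suc n) = (\<lambda>a b. a \<in> D \<and> b \<in> D \<and> \<Phi> (gfp_stage D \<Phi> n) a b)"

definition GFP :: "'a set \<Rightarrow> (('a \<Rightarrow> 'a \<Rightarrow> bool) \<Rightarrow> 'a \<Rightarrow> 'a \<Rightarrow> bool) \<Rightarrow> 'a \<Rightarrow> 'a \<Rightarrow> bool" where
  "GFP D \<Phi> a b \<longleftrightarrow> (\<forall>n. gfp_stage D \<Phi> n a b)"

text \<open>Body of \<phi>_WL, evaluated in structure A with W interpreted as the given relation:
  W x y \<and> \<forall>z. H y x [E x y \<and> W y z, E y x \<and> W x z]
  (y is bound in the first formula, x in the second).\<close>
definition phiWL_body :: "'a struc \<Rightarrow> ('a \<Rightarrow> 'a \<Rightarrow> bool) \<Rightarrow> 'a \<Rightarrow> 'a \<Rightarrow> bool" where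
  "phiWL_body A W x y \<longleftrightarrow> W x y \<and>
     (\<forall>z \<in> sdom A. hartig (sdom A) (\<lambda>y'. (x, y') \<in> sE A \<and> W y' z)
                                     (\<lambda>x'. (y, x') \<in> sE A \<and> W x' z))"

definition sat_phiWL :: "'a struc \<Rightarrow> 'a \<Rightarrow> 'a \<Rightarrow> bool" where
  "sat_phiWL A a b \<longleftrightarrow> GFP (sdom A) (phiWL_body A) a b"

end

theory Submission
  imports Defs
begin

lemma count_img_mset_set:
  assumes "finite A"
  shows "count (image_mset f (mset_set A)) k = card {v \<in> A. f v = k}"
  using assms
proof (induction A rule: finite_induct)
  case empty
  then show ?case by simp
next
  case (insert x F)
  have e: "{v \<in> insert x F. f v = k} = (if f x = k then insert x {v \<in> F. f v = k} else {v \<in> F. f v = k})"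
    by auto
  show ?case
  proof (cases "f x = k")
    case True
    then have "{v \<in> insert x F. f v = k} = insert x {v \<in> F. f v = k}" by auto
    then show ?thesis using insert True by (simp only:) simp
  next
    case False
    then have "{v \<in> insert x F. f v = k} = {v \<in> F. f v = k}" by auto
    then show ?thesis using insert False by (simp only:) simp
  qed
qed

lemma succ_Inl: "{v. (Inl w, v) \<in> sE (dunion M N)} = Inl ` {v. (w, v) \<in> sE M}"
  by (auto simp: dunion_def)

lemma succ_Inr: "{v. (Inr w, v) \<in> sE (dunion M N)} = Inr ` {v. (w, v) \<in> sE N}"
  by (auto simp: dunion_def)

lemma wl_Inl: "wl (dunion M N) n (Inl w) = wl M n w"
proof (induction n arbitrary: w)
  case 0 then show ?case by simp
next
  case (Suc n)
  have "image_mset (wl (dunion M N) n) (mset_set (Inl ` {v. (w, v) \<in> sE M}))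
      = image_mset (wl (dunion M N) n \<circ> Inl) (mset_set {v. (w, v) \<in> sE M})"
    by (simp flip: image_mset_mset_set add: image_mset.compositionality)
  also have "\<dots> = image_mset (wl M n) (mset_set {v. (w, v) \<in> sE M})"
    using Suc by (intro image_mset_cong) simp
  finally show ?case using Suc by (simp add: succ_Inl)
qed

lemma wl_Inr: "wl (dunion M N) n (Inr w) = wl N n w"
proof (induction n arbitrary: w)
  case 0 then show ?case by simp
next
  case (Suc n)
  have "image_mset (wl (dunion M N) n) (mset_set (Inr ` {v. (w, v) \<in> sE N}))
      = image_mset (wl (dunion M N) n \<circ> Inr) (mset_set {v. (w, v) \<in> sE N})"
    by (simp flip: image_mset_mset_set add: image_mset.compositionality)
  also have "\<dots> = image_mset (wl N n) (mset_set {v. (w, v) \<in> sE N})"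
    using Suc by (intro image_mset_cong) simp
  finally show ?case using Suc by (simp add: succ_Inr)
qed

lemma stage_wl:
  fixes U :: "'c struc"
  assumes fin: "finite_struc U"
  shows "gfp_stage (sdom U) (phiWL_body U) n a b \<longleftrightarrow>
         a \<in> sdom U \<and> b \<in> sdom U \<and> wl U n a = wl U n b"
proof (induction n arbitrary: a b)
  case 0 then show ?case by simp
next
  case (Suc n)
  let ?D = "sdom U" and ?c = "wl U n"
  define S where "S x = {v. (x, v) \<in> sE U}" for x
  have SD: "S x \<subseteq> ?D" for x using fin unfolding finite_struc_def S_def by auto
  have Sf: "finite (S x)" for x using SD fin finite_subset unfolding finite_struc_def by metis
  have IH: "gfp_stage ?D (phiWL_body U) n = (\<lambda>a b. a \<in> ?D \<and> b \<in> ?D \<and> ?c a = ?c b)"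
    using Suc by (intro ext) blast
  have cnt: "count (image_mset ?c (mset_set (S x))) k = card {v \<in> S x. ?c v = k}" for x k
    by (rule count_img_mset_set[OF Sf])
  have setq: "{y' \<in> ?D. (x, y') \<in> sE U \<and> (y' \<in> ?D \<and> z \<in> ?D \<and> ?c y' = ?c z)}
      = {v \<in> S x. ?c v = ?c z}" if "z \<in> ?D" for x z
    using SD that unfolding S_def by auto
  have key: "(\<forall>z\<in>?D. card {v \<in> S a. ?c v = ?c z} = card {v \<in> S b. ?c v = ?c z})
      \<longleftrightarrow> image_mset ?c (mset_set (S a)) = image_mset ?c (mset_set (S b))"
  proof
    assume H: "\<forall>z\<in>?D. card {v \<in> S a. ?c v = ?c z} = card {v \<in> S b. ?c v = ?c z}"
    show "image_mset ?c (mset_set (S a)) = image_mset ?c (mset_set (S b))"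
    proof (rule multiset_eqI)
      fix k
      show "count (image_mset ?c (mset_set (S a))) k = count (image_mset ?c (mset_set (S b))) k"
      proof (cases "\<exists>v \<in> S a \<union> S b. ?c v = k")
        case True
        then obtain z0 where z0: "z0 \<in> ?D" "?c z0 = k" using SD by blast
        have "card {v \<in> S a. ?c v = ?c z0} = card {v \<in> S b. ?c v = ?c z0}"
          using H z0(1) by blast
        then show ?thesis by (simp only: cnt z0(2))
      next
        case False
        then have "{v \<in> S a. ?c v = k} = {}" "{v \<in> S b. ?c v = k} = {}" by auto
        then show ?thesis by (simp only: cnt)
      qed
    qed
  next
    assume "image_mset ?c (mset_set (S a)) = image_mset ?c (mset_set (S b))"
    then show "\<forall>z\<in>?D. card {v \<in> S a. ?c v = ?c z} = card {v \<in> S b. ?c v = ?c z}"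
      by (simp flip: cnt)
  qed
  have "gfp_stage ?D (phiWL_body U) (Suc n) a b \<longleftrightarrow>
     a \<in> ?D \<and> b \<in> ?D \<and> ?c a = ?c b \<and>
     (\<forall>z\<in>?D. card {v \<in> S a. ?c v = ?c z} = card {v \<in> S b. ?c v = ?c z})"
  proof -
    have "gfp_stage ?D (phiWL_body U) (Suc n) a b \<longleftrightarrow> a \<in> ?D \<and> b \<in> ?D \<and>
      phiWL_body U (\<lambda>a b. a \<in> ?D \<and> b \<in> ?D \<and> ?c a = ?c b) a b"
      by (simp only: gfp_stage.simps IH)
    moreover have "phiWL_body U (\<lambda>a b. a \<in> ?D \<and> b \<in> ?D \<and> ?c a = ?c b) a b \<longleftrightarrow>
       a \<in> ?D \<and> b \<in> ?D \<and> ?c a = ?c b \<and>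
       (\<forall>z\<in>?D. card {v \<in> S a. ?c v = ?c z} = card {v \<in> S b. ?c v = ?c z})"
      unfolding phiWL_body_def hartig_def
      using setq[of _ a] setq[of _ b] by auto
    ultimately show ?thesis by blast
  qed
  also have "\<dots> \<longleftrightarrow> a \<in> ?D \<and> b \<in> ?D \<and> wl U (Suc n) a = wl U (Suc n) b"
    using key by (simp add: S_def)
  finally show ?case .
qed

theorem theorem3:
  fixes M :: "'a struc" and N :: "'b struc" and w :: 'a and u :: 'b
  assumes "finite_struc M" and "finite_struc N"
    and "w \<in> sdom M" and "u \<in> sdom N"
  shows "WL_inf_eq M w N u \<longleftrightarrow> sat_phiWL (dunion M N) (Inl w) (Inr u)"
proof -
  have fU: "finite_struc (dunion M N)"
    using assms(1,2) unfolding finite_struc_def dunion_def by auto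
  have inD: "Inl w \<in> sdom (dunion M N)" "Inr u \<in> sdom (dunion M N)"
    using assms(3,4) by (auto simp: dunion_def)
  show ?thesis
    unfolding sat_phiWL_def GFP_def WL_inf_eq_def
    using stage_wl[OF fU] inD by (simp add: wl_Inl wl_Inr)
qed

end
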